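(* Let $\beta\ge0$ with $\beta\ne1$, $\rho\in\mathbb{R}$ and $t>0$. Let $\psi$ be a positive, increasing, $C^2$ function on $[0,t]$ such that $$\psi''(s)\ge2\rho\,\psi'(s)+\mathcal{A}\,e^{-2\rho(2-\beta)(t-s)}\psi'(s)^\beta\quad\text{for all }s\in[0,t],$$ where $\mathcal{A}$ is a real number with $\mathcal{A}(\beta-1)\ge0$. Let $\xi(x)=\frac{1-\beta}{2-\beta}\cdot\frac{(1+x)^{\frac{2-\beta}{1-\beta}}-1}{x}$. Then $$\psi(t)-\psi(0)\le\psi'(t)\,\frac{1-e^{-2\rho t}}{2\rho}\,\xi(K_1),\qquad K_1=\frac{1-e^{-2\rho t}}{2\rho}\cdot\frac{\mathcal{A}(\beta-1)}{\psi'(t)^{1-\beta}}.$$ If moreover $1+K_2\ge0$, where $K_2=\frac{e^{2\rho t}-1}{2\rho}\cdot\frac{\mathcal{A}(1-\beta)}{\psi'(0)^{1-\beta}}e^{-2\rho(2-\beta)t}$, then $$\psi(t)-\psi(0)\ge\psi'(0)\,\frac{e^{2\rho t}-1}{2\rho}\,\xi(K_2).$$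
   Context: When $\rho=0$, the factors $\frac{1-e^{-2\rho t}}{2\rho}$ and $\frac{e^{2\rho t}-1}{2\rho}$ are understood as $t$. *)

theory Defs
  imports "HOL-Analysis.Analysis"
begin

definition fac_minus :: "real \<Rightarrow> real \<Rightarrow> real" where
  "fac_minus \<rho> t = (if \<rho> = 0 then t else (1 - exp (- 2 * \<rho> * t)) / (2 * \<rho>))"

definition fac_plus :: "real \<Rightarrow> real \<Rightarrow> real" where
  "fac_plus \<rho> t = (if \<rho> = 0 then t else (exp (2 * \<rho> * t) - 1) / (2 * \<rho>))"

text \<open>xi(x) = (1-beta)/(2-beta) * ((1+x)^((2-beta)/(1-beta)) - 1)/x, extended by
  continuity: xi(0) = 1, and for beta = 2, xi(x) = ln(1+x)/x.\<close>
definition xi :: "real \<Rightarrow> real \<Rightarrow> real" where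
  "xi \<beta> x = (if x = 0 then 1
     else if \<beta> = 2 then ln (1 + x) / x
     else (1 - \<beta>) / (2 - \<beta>) * (((1 + x) powr ((2 - \<beta>) / (1 - \<beta>)) - 1) / x))"

end

theory Submission imports Defs begin
definition Phi :: "real \<Rightarrow> real \<Rightarrow> real \<Rightarrow> real \<Rightarrow> real" where
  "Phi \<beta> X k \<sigma> = (if k = 0 then X powr (1/(1-\<beta>)) * \<sigma>
     else if \<beta> = 2 then ln (X + k*\<sigma>) / k
     else (X + k*\<sigma>) powr ((2-\<beta>)/(1-\<beta>)) / (k * ((2-\<beta>)/(1-\<beta>))))"

lemma Phi_deriv:
  assumes "\<beta> \<noteq> 1" "X + k*\<sigma> > 0"
  shows "(Phi \<beta> X k has_real_derivative (X + k*\<sigma>) powr (1/(1-\<beta>))) (at \<sigma>)"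
proof (cases "k = 0")
  case True
  then show ?thesis unfolding Phi_def by (auto intro!: derivative_eq_intros)
next
  case k: False
  show ?thesis
  proof (cases "\<beta> = 2")
    case True
    have "(Phi \<beta> X k has_real_derivative (1/(X+k*\<sigma>))) (at \<sigma>)"
      unfolding Phi_def using k True assms
      by (auto intro!: derivative_eq_intros simp: divide_simps)
    moreover have "(X + k*\<sigma>) powr (1/(1-\<beta>)) = 1/(X+k*\<sigma>)"
      using True assms by (simp add: powr_minus divide_inverse)
    ultimately show ?thesis by simp
  next
    case b2: False
    have p: "(2-\<beta>)/(1-\<beta>) \<noteq> 0" using b2 assms by auto
    have e: "(2-\<beta>)/(1-\<beta>) - 1 = 1/(1-\<beta>)" using assms by (simp add: field_simps)
    have v: "((2-\<beta>)/(1-\<beta>) * (X + k*\<sigma>) powr ((2-\<beta>)/(1-\<beta>) - 1) * k) / (k * ((2-\<beta>)/(1-\<beta>)))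
       = (X + k*\<sigma>) powr (1/(1-\<beta>))" unfolding e using k p by simp
    have "(Phi \<beta> X k has_real_derivative
         ((2-\<beta>)/(1-\<beta>) * (X + k*\<sigma>) powr ((2-\<beta>)/(1-\<beta>) - 1) * k) / (k * ((2-\<beta>)/(1-\<beta>)))) (at \<sigma>)"
      unfolding Phi_def using k b2 assms
      by (auto intro!: derivative_eq_intros)
    then show ?thesis unfolding v .
  qed
qed

lemma Phi_cont:
  assumes "\<beta> \<noteq> 1" "\<forall>\<sigma>\<in>S. X + k*\<sigma> \<ge> 0" "\<beta> > 1 \<Longrightarrow> \<forall>\<sigma>\<in>S. X + k*\<sigma> > 0"
  shows "continuous_on S (Phi \<beta> X k)"
proof (cases "k = 0")
  case True
  then show ?thesis unfolding Phi_def by (auto intro!: continuous_intros)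
next
  case k: False
  show ?thesis
  proof (cases "\<beta> = 2")
    case True
    then show ?thesis unfolding Phi_def using k assms
      by (auto intro!: continuous_intros)
  next
    case b2: False
    have "continuous_on S (\<lambda>\<sigma>. (X + k*\<sigma>) powr ((2-\<beta>)/(1-\<beta>)))"
    proof (cases "\<beta> > 1")
      case True
      then show ?thesis using assms by (auto intro!: continuous_intros)
    next
      case False
      then have "(2-\<beta>)/(1-\<beta>) > 0" using assms by auto
      then show ?thesis using assms
        by (intro continuous_on_powr') (auto intro!: continuous_intros)
    qed
    then show ?thesis unfolding Phi_def using k b2
      by (auto intro!: continuous_intros)
  qed
qed

lemma Phi_diff:
  assumes "\<beta> \<noteq> 1" "X > 0" "T > 0" "X + k*T \<ge> 0" "\<beta> > 1 \<Longrightarrow> X + k*T > 0"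
  shows "Phi \<beta> X k T - Phi \<beta> X k 0 = T * X powr (1/(1-\<beta>)) * xi \<beta> (k*T/X)"
proof (cases "k = 0")
  case True
  then show ?thesis unfolding Phi_def xi_def by simp
next
  case k: False
  have K: "k*T/X \<noteq> 0" using k assms by simp
  have base: "X + k*T = X * (1 + k*T/X)" using assms by (simp add: field_simps)
  have b1: "1 + k*T/X \<ge> 0" using assms base by (simp add: zero_le_mult_iff)
  show ?thesis
  proof (cases "\<beta> = 2")
    case True
    have b1': "1 + k*T/X > 0" using assms base True by (simp add: zero_less_mult_iff)
    have "Phi \<beta> X k T - Phi \<beta> X k 0 = (ln (X + k*T) - ln X) / k"
      unfolding Phi_def using k True by (simp add: diff_divide_distrib)
    also have "\<dots> = ln (1 + k*T/X) / k" using base b1' assms by (simp add: ln_mult)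
    also have "\<dots> = T * X powr (1/(1-\<beta>)) * xi \<beta> (k*T/X)"
      unfolding xi_def using K True assms k by (simp add: powr_minus field_simps)
    finally show ?thesis .
  next
    case b2: False
    define p where "p = (2-\<beta>)/(1-\<beta>)"
    have p: "p \<noteq> 0" using b2 assms by (auto simp: p_def)
    have pq: "p = 1/(1-\<beta>) + 1" using assms by (simp add: p_def field_simps)
    have Xp: "X powr p = X powr (1/(1-\<beta>)) * X" using assms by (simp add: pq powr_add)
    have "Phi \<beta> X k T - Phi \<beta> X k 0 = ((X + k*T) powr p - X powr p) / (k*p)"
      unfolding Phi_def using k b2 by (simp add: p_def diff_divide_distrib)
    also have "\<dots> = X powr p * ((1 + k*T/X) powr p - 1) / (k*p)"
      using base b1 assms by (simp add: powr_mult right_diff_distrib)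
    also have "\<dots> = T * X powr (1/(1-\<beta>)) * xi \<beta> (k*T/X)"
      unfolding xi_def using K b2 assms k p Xp
      by (simp add: p_def[symmetric]) (simp add: p_def field_simps)
    finally show ?thesis .
  qed
qed

lemma F_deriv: "((\<lambda>x. fac_plus \<rho> x) has_real_derivative exp (2*\<rho>*x)) (at x)"
proof (cases "\<rho> = 0")
  case True then show ?thesis unfolding fac_plus_def by (auto intro!: derivative_eq_intros)
next
  case False
  have "((\<lambda>x. (exp (2*\<rho>*x) - 1) / (2*\<rho>)) has_real_derivative (exp (2*\<rho>*x) * (2*\<rho>)) / (2*\<rho>)) (at x)"
    by (auto intro!: derivative_eq_intros)
  then show ?thesis unfolding fac_plus_def using False by simp
qed

lemma F_cont: "continuous_on S (\<lambda>s. fac_plus \<rho> s)"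
  by (rule DERIV_continuous_on, rule has_field_derivative_at_within, rule F_deriv)

lemma F_zero[simp]: "fac_plus \<rho> 0 = 0" unfolding fac_plus_def by simp

lemma F_less: assumes "a < b" shows "fac_plus \<rho> a < fac_plus \<rho> b"
proof -
  consider "\<rho> = 0" | "\<rho> > 0" | "\<rho> < 0" by linarith
  then show ?thesis
  proof cases
    case 1 then show ?thesis using assms unfolding fac_plus_def by simp
  next
    case 2
    then have "exp (2*\<rho>*a) < exp (2*\<rho>*b)" using assms by simp
    then show ?thesis using 2 unfolding fac_plus_def by (simp add: divide_strict_right_mono)
  next
    case 3
    then have "exp (2*\<rho>*a) > exp (2*\<rho>*b)" using assms by simp
    then show ?thesis using 3 unfolding fac_plus_def by (simp add: divide_strict_right_mono_neg)
  qed
qed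

lemma F_le: assumes "a \<le> b" shows "fac_plus \<rho> a \<le> fac_plus \<rho> b"
  using F_less[of a b \<rho>] assms by (cases "a = b") auto

lemma fac_minus_eq: "fac_minus \<rho> t = exp (-2*\<rho>*t) * fac_plus \<rho> t"
  unfolding fac_minus_def fac_plus_def
  by (auto simp: field_simps exp_add[symmetric])

theorem lemma12:
  fixes \<beta> \<rho> t \<A> :: real and \<psi> \<psi>' \<psi>'' :: "real \<Rightarrow> real"
  assumes hbeta: "\<beta> \<ge> 0" "\<beta> \<noteq> 1"
    and ht: "t > 0"
    and hd1: "\<forall>s\<in>{0..t}. (\<psi> has_real_derivative \<psi>' s) (at s within {0..t})"
    and hd2: "\<forall>s\<in>{0..t}. (\<psi>' has_real_derivative \<psi>'' s) (at s within {0..t})"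
    and hcont: "continuous_on {0..t} \<psi>''"
    and hpos: "\<forall>s\<in>{0..t}. \<psi> s > 0"
    and hincr: "\<forall>s\<in>{0..t}. \<psi>' s > 0"
    and hA: "\<A> * (\<beta> - 1) \<ge> 0"
    and hineq: "\<forall>s\<in>{0..t}. \<psi>'' s \<ge> 2 * \<rho> * \<psi>' s
                 + \<A> * exp (- 2 * \<rho> * (2 - \<beta>) * (t - s)) * \<psi>' s powr \<beta>"
  shows "\<psi> t - \<psi> 0 \<le> \<psi>' t * fac_minus \<rho> t
           * xi \<beta> (fac_minus \<rho> t * (\<A> * (\<beta> - 1)) / \<psi>' t powr (1 - \<beta>))
    \<and> (1 + fac_plus \<rho> t * (\<A> * (1 - \<beta>)) / \<psi>' 0 powr (1 - \<beta>)
               * exp (- 2 * \<rho> * (2 - \<beta>) * t) \<ge> 0 \<longrightarrow>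
         \<psi> t - \<psi> 0 \<ge> \<psi>' 0 * fac_plus \<rho> t
           * xi \<beta> (fac_plus \<rho> t * (\<A> * (1 - \<beta>)) / \<psi>' 0 powr (1 - \<beta>)
                    * exp (- 2 * \<rho> * (2 - \<beta>) * t)))"
proof -
  define c where "c = \<A> * (\<beta> - 1)"
  define m where "m = exp (- 2 * \<rho> * (2 - \<beta>) * t)"
  define F where "F = (\<lambda>x. fac_plus \<rho> x)"
  define T where "T = F t"
  define h where "h = (\<lambda>x. exp (-2*\<rho>*x) * \<psi>' x)"
  define h' where "h' = (\<lambda>x. exp (-2*\<rho>*x) * \<psi>'' x - 2*\<rho>*exp (-2*\<rho>*x) * \<psi>' x)"
  define W where "W = (\<lambda>x. h x powr (1-\<beta>))"
  define E where "E = (\<lambda>x. W x + c*m*F x)"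
  define q where "q = 1/(1-\<beta>)"
  have c0: "c \<ge> 0" using hA by (simp add: c_def)
  have m0: "m > 0" by (simp add: m_def)
  have cm0: "c*m \<ge> 0" using c0 m0 by simp
  have T0: "T > 0" using F_less[of 0 t \<rho>] ht by (simp add: T_def F_def)
  have FI: "F x \<in> {0..T}" if "x \<in> {0..t}" for x
    using F_le[of 0 x \<rho>] F_le[of x t \<rho>] that by (simp add: T_def F_def)
  have FIo: "F x \<in> {0<..<T}" if "x \<in> {0<..<t}" for x
    using F_less[of 0 x \<rho>] F_less[of x t \<rho>] that by (simp add: T_def F_def)
  have Fd: "(F has_real_derivative exp (2*\<rho>*x)) (at x)" for x
    unfolding F_def by (rule F_deriv)
  have Fc: "continuous_on S F" for S unfolding F_def by (rule F_cont)
  have hpos': "h x > 0" if "x \<in> {0..t}" for x using hincr that by (simp add: h_def)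
  have Wpos: "W x > 0" if "x \<in> {0..t}" for x using hpos'[OF that] by (simp add: W_def)
  have Wq: "W x powr q = h x" if "x \<in> {0..t}" for x
    using hpos'[OF that] hbeta by (simp add: W_def q_def powr_powr)
  have psih: "\<psi>' x = exp (2*\<rho>*x) * h x" for x
    by (simp add: h_def exp_minus[symmetric] mult.assoc[symmetric] exp_add[symmetric])
  have d1: "(\<psi> has_real_derivative \<psi>' x) (at x)" if "x \<in> {0<..<t}" for x
    using hd1 that at_within_Icc_at[of 0 x t] by (metis greaterThanLessThan_iff atLeastAtMost_iff less_imp_le)
  have d2: "(\<psi>' has_real_derivative \<psi>'' x) (at x)" if "x \<in> {0<..<t}" for x
    using hd2 that at_within_Icc_at[of 0 x t] by (metis greaterThanLessThan_iff atLeastAtMost_iff less_imp_le)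
  have cpsi: "continuous_on {0..t} \<psi>" using hd1 by (intro DERIV_continuous_on) auto
  have cpsi': "continuous_on {0..t} \<psi>'" using hd2 by (intro DERIV_continuous_on) auto
  have hd: "(h has_real_derivative h' x) (at x)" if "x \<in> {0<..<t}" for x
    unfolding h_def h'_def using d2[OF that]
    by (auto intro!: derivative_eq_intros simp: algebra_simps)
  have hineq': "h' x \<ge> \<A> * m * exp (2*\<rho>*x) * h x powr \<beta>" if "x \<in> {0..t}" for x
  proof -
    have e: "exp (-2*\<rho>*x) * exp (- 2 * \<rho> * (2 - \<beta>) * (t - x)) = m * exp (2*\<rho>*x) * exp (-2*\<rho>*x*\<beta>)"
      unfolding m_def exp_add[symmetric] by (simp add: algebra_simps)
    have hb: "h x powr \<beta> = exp (-2*\<rho>*x*\<beta>) * \<psi>' x powr \<beta>"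
      using hincr that by (simp add: h_def powr_mult exp_powr_real)
    have "h' x = exp (-2*\<rho>*x) * (\<psi>'' x - 2*\<rho>*\<psi>' x)" by (simp add: h'_def algebra_simps)
    also have "\<dots> \<ge> exp (-2*\<rho>*x) * (\<A> * exp (- 2 * \<rho> * (2 - \<beta>) * (t - x)) * \<psi>' x powr \<beta>)"
      using bspec[OF hineq that] by (intro mult_left_mono) auto
    finally show ?thesis using e hb by (simp add: algebra_simps)
  qed
  define E' where "E' = (\<lambda>x. (1-\<beta>) * h x powr (1-\<beta>-1) * h' x + c*m*exp (2*\<rho>*x))"
  have Ed: "(E has_real_derivative E' x) (at x)" if "x \<in> {0<..<t}" for x
    unfolding E_def W_def E'_def using hd[OF that] hpos'[of x] that Fd[of x]
    by (auto intro!: derivative_eq_intros)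
  have E'nn: "(1-\<beta>) * E' x \<ge> 0" if "x \<in> {0<..<t}" for x
  proof -
    have hp: "h x > 0" using hpos' that by auto
    have inv: "h x powr (-\<beta>) * h x powr \<beta> = 1" using hp by (simp add: powr_add[symmetric])
    have "h x powr (-\<beta>) * h' x \<ge> h x powr (-\<beta>) * (\<A> * m * exp (2*\<rho>*x) * h x powr \<beta>)"
      using hineq'[of x] that by (intro mult_left_mono) auto
    moreover have "h x powr (-\<beta>) * (\<A> * m * exp (2*\<rho>*x) * h x powr \<beta>) = \<A> * m * exp (2*\<rho>*x) * (h x powr (-\<beta>) * h x powr \<beta>)"
      by (simp only: ac_simps)
    ultimately have *: "h x powr (-\<beta>) * h' x - \<A> * m * exp (2*\<rho>*x) \<ge> 0"
      using inv by simp
    have "(1-\<beta>) * E' x = (1-\<beta>)^2 * (h x powr (-\<beta>) * h' x - \<A> * m * exp (2*\<rho>*x))"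
      by (simp add: E'_def c_def power2_eq_square algebra_simps)
    then show ?thesis using * by simp
  qed
  have Ec: "continuous_on {0..t} E"
    unfolding E_def W_def h_def using cpsi' hincr Fc
    by (auto intro!: continuous_intros)
  have Emono: "(1-\<beta>) * E a \<le> (1-\<beta>) * E b" if "0 \<le> a" "a \<le> b" "b \<le> t" for a b
  proof (rule DERIV_nonneg_imp_increasing_open[OF that(2)])
    fix x assume "a < x" "x < b"
    then have x: "x \<in> {0<..<t}" using that by auto
    show "\<exists>y. ((\<lambda>x. (1-\<beta>) * E x) has_real_derivative y) (at x) \<and> 0 \<le> y"
      using Ed[OF x] E'nn[OF x] by (intro exI[of _ "(1-\<beta>) * E' x"]) (auto intro!: derivative_eq_intros)
  next
    show "continuous_on {a..b} (\<lambda>x. (1-\<beta>) * E x)"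
      using that by (intro continuous_intros continuous_on_subset[OF Ec]) auto
  qed
  have F0: "F 0 = 0" by (simp add: F_def)
  have Ft: "F t = T" by (simp add: T_def)
  have t01: "0 \<in> {0..t}" "t \<in> {0..t}" using ht by auto
  have q_sign1: "\<beta> < 1 \<Longrightarrow> q \<ge> 0" "\<beta> > 1 \<Longrightarrow> q \<le> 0" by (auto simp: q_def)
  have b_cases: "\<beta> < 1 \<or> \<beta> > 1" using hbeta by auto
  define Wt where "Wt = W t"
  have Wt0: "Wt > 0" using Wpos t01 by (simp add: Wt_def)
  have ub: "\<psi>' x \<le> exp (2*\<rho>*x) * (Wt + c*m*(T - F x)) powr q" if x: "x \<in> {0..t}" for x
  proof -
    have M: "(1-\<beta>) * E x \<le> (1-\<beta>) * E t" using Emono[of x t] x by auto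
    have Tx: "T - F x \<ge> 0" using FI[OF x] by auto
    have "h x \<le> (Wt + c*m*(T - F x)) powr q"
      using b_cases
    proof
      assume b: "\<beta> < 1"
      then have "E x \<le> E t" using M by (simp add: mult_le_cancel_left)
      then have "W x \<le> Wt + c*m*(T - F x)" by (simp add: E_def Wt_def Ft algebra_simps)
      then have "W x powr q \<le> (Wt + c*m*(T - F x)) powr q"
        using q_sign1(1)[OF b] Wpos[OF x] by (intro powr_mono2) auto
      then show ?thesis using Wq[OF x] by simp
    next
      assume b: "\<beta> > 1"
      then have "E t \<le> E x" using M by (simp add: mult_le_cancel_left)
      then have "Wt + c*m*(T - F x) \<le> W x" by (simp add: E_def Wt_def Ft algebra_simps)
      moreover have "Wt + c*m*(T - F x) > 0" using Wt0 cm0 Tx by (simp add: add_pos_nonneg)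
      ultimately have "W x powr q \<le> (Wt + c*m*(T - F x)) powr q"
        using q_sign1(2)[OF b] by (intro powr_mono2') auto
      then show ?thesis using Wq[OF x] by simp
    qed
    then show ?thesis unfolding psih[of x] by (intro mult_left_mono) auto
  qed
  define Du where "Du = (\<lambda>x. - (\<psi> x + Phi \<beta> Wt (c*m) (T - F x)))"
  have "Du 0 \<le> Du t"
  proof (rule DERIV_nonneg_imp_increasing_open[of 0 t Du])
    show "0 \<le> t" using ht by simp
    fix x assume "0 < x" "x < t"
    then have x: "x \<in> {0<..<t}" "x \<in> {0..t}" by auto
    have pos: "Wt + c*m*(T - F x) > 0" using Wt0 cm0 FI[OF x(2)] by (simp add: add_pos_nonneg)
    have "((\<lambda>x. Phi \<beta> Wt (c*m) (T - F x)) has_real_derivative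
            (Wt + c*m*(T - F x)) powr q * (0 - exp (2*\<rho>*x))) (at x)"
      unfolding q_def
      by (rule DERIV_chain2[of "Phi \<beta> Wt (c*m)" _ "\<lambda>x. T - F x", OF Phi_deriv[OF hbeta(2) pos]]) (intro derivative_intros Fd)
    then have "(Du has_real_derivative - (\<psi>' x + (Wt + c*m*(T - F x)) powr q * (0 - exp (2*\<rho>*x)))) (at x)"
      unfolding Du_def using d1[OF x(1)] by (intro derivative_intros)
    moreover have "- (\<psi>' x + (Wt + c*m*(T - F x)) powr q * (0 - exp (2*\<rho>*x))) \<ge> 0"
      using ub[OF x(2)] by (simp add: algebra_simps)
    ultimately show "\<exists>y. (Du has_real_derivative y) (at x) \<and> 0 \<le> y" by blast
  next
    have "continuous_on {0..t} (\<lambda>x. Phi \<beta> Wt (c*m) (T - F x))"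
    proof (rule continuous_on_compose2[of "{0..T}" "Phi \<beta> Wt (c*m)" "{0..t}" "\<lambda>x. T - F x"])
      show "continuous_on {0..T} (Phi \<beta> Wt (c * m))"
        using Wt0 cm0 hbeta by (intro Phi_cont) (auto intro!: add_pos_nonneg add_nonneg_nonneg)
      show "continuous_on {0..t} (\<lambda>x. T - F x)" by (intro continuous_intros Fc)
      show "(\<lambda>x. T - F x) ` {0..t} \<subseteq> {0..T}" using FI by fastforce
    qed
    then show "continuous_on {0..t} Du" unfolding Du_def using cpsi by (intro continuous_intros)
  qed
  then have up1: "\<psi> t - \<psi> 0 \<le> Phi \<beta> Wt (c*m) T - Phi \<beta> Wt (c*m) 0"
    by (simp add: Du_def F0 Ft)
  also have "\<dots> = T * Wt powr q * xi \<beta> (c*m*T/Wt)"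
    unfolding q_def using hbeta Wt0 T0 cm0
    by (intro Phi_diff) (auto intro!: add_pos_nonneg add_nonneg_nonneg)
  also have "\<dots> = \<psi>' t * fac_minus \<rho> t * xi \<beta> (fac_minus \<rho> t * (\<A> * (\<beta> - 1)) / \<psi>' t powr (1 - \<beta>))"
  proof -
    have "Wt powr q = h t" using Wq t01 by (simp add: Wt_def)
    then have a: "T * Wt powr q = \<psi>' t * fac_minus \<rho> t"
      by (simp add: fac_minus_eq h_def T_def F_def)
    have Wte: "Wt = exp (-2*\<rho>*t*(1-\<beta>)) * \<psi>' t powr (1-\<beta>)"
      using hincr t01 by (simp add: Wt_def W_def h_def powr_mult exp_powr_real)
    have me: "m = exp (-2*\<rho>*t) * exp (-2*\<rho>*t*(1-\<beta>))"
      unfolding m_def exp_add[symmetric] by (simp add: algebra_simps)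
    have "c*m*T/Wt = fac_minus \<rho> t * (\<A> * (\<beta> - 1)) / \<psi>' t powr (1 - \<beta>)"
      unfolding Wte me fac_minus_eq c_def T_def F_def by simp
    then show ?thesis using a by simp
  qed
  finally have UP: "\<psi> t - \<psi> 0 \<le> \<psi>' t * fac_minus \<rho> t * xi \<beta> (fac_minus \<rho> t * (\<A> * (\<beta> - 1)) / \<psi>' t powr (1 - \<beta>))" .
  have LOW: "\<psi> t - \<psi> 0 \<ge> \<psi>' 0 * fac_plus \<rho> t
           * xi \<beta> (fac_plus \<rho> t * (\<A> * (1 - \<beta>)) / \<psi>' 0 powr (1 - \<beta>)
                    * exp (- 2 * \<rho> * (2 - \<beta>) * t))"
    if hyp: "1 + fac_plus \<rho> t * (\<A> * (1 - \<beta>)) / \<psi>' 0 powr (1 - \<beta>)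
               * exp (- 2 * \<rho> * (2 - \<beta>) * t) \<ge> 0"
  proof -
    define W0 where "W0 = W 0"
    have W0e: "W0 = \<psi>' 0 powr (1-\<beta>)" by (simp add: W0_def W_def h_def)
    have W00: "W0 > 0" using Wpos t01 by (simp add: W0_def)
    have "W0 * (1 + fac_plus \<rho> t * (\<A> * (1 - \<beta>)) / \<psi>' 0 powr (1 - \<beta>)
               * exp (- 2 * \<rho> * (2 - \<beta>) * t)) = W0 + -(c*m)*T"
      using W00 unfolding W0e c_def m_def T_def F_def by (simp add: field_simps)
    with hyp W00 have base0: "W0 + -(c*m)*T \<ge> 0" by (metis zero_le_mult_iff less_imp_le)
    have base1: "\<beta> > 1 \<Longrightarrow> W0 + -(c*m)*T > 0"
    proof -
      assume b: "\<beta> > 1"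
      have "(1-\<beta>) * E 0 \<le> (1-\<beta>) * E t" using Emono[of 0 t] ht by auto
      then have "E t \<le> E 0" using b by (simp add: mult_le_cancel_left)
      then have "W t \<le> W0 + -(c*m)*T" by (simp add: E_def W0_def F0 Ft algebra_simps)
      then show ?thesis using Wpos[OF t01(2)] by simp
    qed
    have bge: "W0 + -(c*m)*\<sigma> \<ge> W0 + -(c*m)*T" if "\<sigma> \<le> T" for \<sigma>
      using that cm0 by (simp add: mult_left_mono)
    have lb: "\<psi>' x \<ge> exp (2*\<rho>*x) * (W0 + -(c*m)*F x) powr q" if x: "x \<in> {0..t}" for x
    proof -
      have M: "(1-\<beta>) * E 0 \<le> (1-\<beta>) * E x" using Emono[of 0 x] x by auto
      have bx: "W0 + -(c*m)*F x \<ge> 0" using bge[of "F x"] FI[OF x] base0 by auto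
      have "h x \<ge> (W0 + -(c*m)*F x) powr q"
        using b_cases
      proof
        assume b: "\<beta> < 1"
        then have "E 0 \<le> E x" using M by (simp add: mult_le_cancel_left)
        then have "W0 + -(c*m)*F x \<le> W x" by (simp add: E_def W0_def F0 algebra_simps)
        then have "(W0 + -(c*m)*F x) powr q \<le> W x powr q"
          using q_sign1(1)[OF b] bx by (intro powr_mono2) auto
        then show ?thesis using Wq[OF x] by simp
      next
        assume b: "\<beta> > 1"
        then have "E x \<le> E 0" using M by (simp add: mult_le_cancel_left)
        then have "W x \<le> W0 + -(c*m)*F x" by (simp add: E_def W0_def F0 algebra_simps)
        then have "W x powr q \<ge> (W0 + -(c*m)*F x) powr q"
          using q_sign1(2)[OF b] Wpos[OF x] by (intro powr_mono2') auto
        then show ?thesis using Wq[OF x] by simp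
      qed
      then show ?thesis unfolding psih[of x] by (intro mult_left_mono) auto
    qed
    define Dl where "Dl = (\<lambda>x. \<psi> x - Phi \<beta> W0 (-(c*m)) (F x))"
    have "Dl 0 \<le> Dl t"
    proof (rule DERIV_nonneg_imp_increasing_open[of 0 t Dl])
      show "0 \<le> t" using ht by simp
      fix x assume "0 < x" "x < t"
      then have x: "x \<in> {0<..<t}" "x \<in> {0..t}" by auto
      have pos: "W0 + -(c*m)*F x > 0"
      proof (cases "c*m = 0")
        case True then show ?thesis using W00 by (metis add.right_neutral minus_zero mult_zero_left)
      next
        case False
        then have "c*m > 0" using cm0 by (metis less_eq_real_def)
        then have "W0 + -(c*m)*F x > W0 + -(c*m)*T" using FIo[OF x(1)] by (simp add: mult_strict_left_mono)
        then show ?thesis using base0 by linarith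
      qed
      have "((\<lambda>x. Phi \<beta> W0 (-(c*m)) (F x)) has_real_derivative
              (W0 + -(c*m)*F x) powr q * exp (2*\<rho>*x)) (at x)"
        unfolding q_def
        by (rule DERIV_chain2[of "Phi \<beta> W0 (-(c*m))" _ F, OF Phi_deriv[OF hbeta(2) pos] Fd])
      then have "(Dl has_real_derivative \<psi>' x - (W0 + -(c*m)*F x) powr q * exp (2*\<rho>*x)) (at x)"
        unfolding Dl_def using d1[OF x(1)] by (intro derivative_intros)
      moreover have "\<psi>' x - (W0 + -(c*m)*F x) powr q * exp (2*\<rho>*x) \<ge> 0"
        using lb[OF x(2)] by (simp add: algebra_simps)
      ultimately show "\<exists>y. (Dl has_real_derivative y) (at x) \<and> 0 \<le> y" by blast
    next
      have "continuous_on {0..t} (\<lambda>x. Phi \<beta> W0 (-(c*m)) (F x))"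
      proof (rule continuous_on_compose2[of "{0..T}" "Phi \<beta> W0 (-(c*m))" "{0..t}" F])
        show "continuous_on {0..T} (Phi \<beta> W0 (-(c * m)))"
          using hbeta(2) bge base0 base1 by (intro Phi_cont) (auto, fastforce, meson le_less_trans)
        show "continuous_on {0..t} F" by (rule Fc)
        show "F ` {0..t} \<subseteq> {0..T}" using FI by fastforce
      qed
      then show "continuous_on {0..t} Dl" unfolding Dl_def using cpsi by (intro continuous_intros)
    qed
    then have "Phi \<beta> W0 (-(c*m)) T - Phi \<beta> W0 (-(c*m)) 0 \<le> \<psi> t - \<psi> 0"
      by (simp add: Dl_def F0 Ft)
    moreover have "Phi \<beta> W0 (-(c*m)) T - Phi \<beta> W0 (-(c*m)) 0 = T * W0 powr q * xi \<beta> (-(c*m)*T/W0)"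
      unfolding q_def using hbeta W00 T0 base0 base1 by (intro Phi_diff) auto
    moreover have "W0 powr q = \<psi>' 0" using Wq[OF t01(1)] by (simp add: W0_def h_def)
    moreover have "-(c*m)*T/W0 = fac_plus \<rho> t * (\<A> * (1 - \<beta>)) / \<psi>' 0 powr (1 - \<beta>)
                    * exp (- 2 * \<rho> * (2 - \<beta>) * t)"
      unfolding W0e c_def m_def T_def F_def by (simp add: field_simps)
    ultimately show ?thesis by (simp add: T_def F_def mult.commute)
  qed
  show ?thesis using UP LOW by blast
qed

end
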